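(* Let $R$ be a commutative ring with $1$ and let $(S,m)$ be a multiset in $R$ (a finite subset $S\subseteq R$ with multiplicities $m:S\to\{1,2,\dots\}$) such that $s-s^*$ is a unit of $R$ for all $s\ne s^*$ in $S$. Let $d(S)=\sum_{s\in S}m(s)$ and $t=d(S)-1$. Then there exist elements $\alpha(s,u)\in R$ for all $s\in S$ and $0\le u<m(s)$ such that for every integer $\ell\ge 0$, $$\sum_{s\in S}\sum_{0\le u<m(s)}\alpha(s,u)\binom{\ell}{u}s^{\ell-u}=\begin{cases}0&\text{if }\ell<t,\\1&\text{if }\ell=t.\end{cases}$$ (No condition is imposed for $\ell>t$.)
   Context: By convention, a term $\binom{\ell}{u}s^{\ell-u}$ with $u>\ell$ is $0$ (since $\binom{\ell}{u}=0$). *)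

theory Defs
  imports Main
begin

end

theory Submission
  imports Defs
begin

definition fb :: "'a::comm_ring_1 \<Rightarrow> nat \<Rightarrow> nat \<Rightarrow> 'a" where
  "fb s u l = of_nat (l choose u) * s ^ (l - u)"

definition val :: "('a::comm_ring_1 \<Rightarrow> nat \<Rightarrow> 'a) \<Rightarrow> 'a set \<Rightarrow> ('a \<Rightarrow> nat) \<Rightarrow> nat \<Rightarrow> 'a" where
  "val \<alpha> S m l = (\<Sum>s\<in>S. \<Sum>u<m s. \<alpha> s u * fb s u l)"

definition inspan :: "'a::comm_ring_1 set \<Rightarrow> ('a \<Rightarrow> nat) \<Rightarrow> (nat \<Rightarrow> 'a) \<Rightarrow> bool" where
  "inspan S m v \<longleftrightarrow> (\<exists>\<alpha>. v = val \<alpha> S m)"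

lemma inspan_zero: "inspan S m (\<lambda>l. 0)"
  unfolding inspan_def val_def by (rule exI[of _ "\<lambda>_ _. 0"]) simp

lemma inspan_add:
  assumes "inspan S m v" "inspan S m w"
  shows "inspan S m (\<lambda>l. v l + w l)"
proof -
  obtain \<alpha> \<beta> where "v = val \<alpha> S m" "w = val \<beta> S m" using assms inspan_def by blast
  then show ?thesis unfolding inspan_def
    by (intro exI[of _ "\<lambda>s u. \<alpha> s u + \<beta> s u"])
       (auto simp: val_def distrib_right sum.distrib)
qed

lemma inspan_scale:
  assumes "inspan S m v"
  shows "inspan S m (\<lambda>l. c * v l)"
proof -
  obtain \<alpha> where "v = val \<alpha> S m" using assms inspan_def by blast
  then show ?thesis unfolding inspan_def
    by (intro exI[of _ "\<lambda>s u. c * \<alpha> s u"])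
       (auto simp: val_def sum_distrib_left mult.assoc)
qed

lemma inspan_diff:
  assumes "inspan S m v" "inspan S m w"
  shows "inspan S m (\<lambda>l. v l - w l)"
  using inspan_add[OF assms(1) inspan_scale[OF assms(2), of "-1"]] by simp

lemma inspan_sum:
  assumes "finite I" "\<forall>i\<in>I. inspan S m (g i)"
  shows "inspan S m (\<lambda>l. \<Sum>i\<in>I. g i l)"
  using assms
proof (induction I rule: finite_induct)
  case empty
  then show ?case using inspan_zero by simp
next
  case (insert x F)
  then show ?case using inspan_add[of S m "g x" "\<lambda>l. \<Sum>i\<in>F. g i l"] by simp
qed

lemma inspan_basis:
  assumes "finite S" "a \<in> S" "u < m a"
  shows "inspan S m (fb a u)"
proof -
  have "fb a u l = val (\<lambda>s v. if s = a \<and> v = u then 1 else 0) S m l" for l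
  proof -
    have "val (\<lambda>s v. if s = a \<and> v = u then 1 else 0) S m l
        = (\<Sum>s\<in>S. if s = a then fb a u l else 0)"
      unfolding val_def
    proof (rule sum.cong)
      fix s assume "s \<in> S"
      show "(\<Sum>v<m s. (if s = a \<and> v = u then 1 else 0) * fb s v l) = (if s = a then fb a u l else 0)"
      proof (cases "s = a")
        case True
        have "(\<Sum>v<m s. (if s = a \<and> v = u then 1 else 0) * fb s v l) = (\<Sum>v<m a. if v = u then fb a u l else 0)"
          using True by (intro sum.cong) auto
        also have "\<dots> = fb a u l" using assms by simp
        finally show ?thesis using True by simp
      qed simp
    qed simp
    also have "\<dots> = fb a u l" using assms by simp
    finally show ?thesis by simp
  qed
  then show ?thesis unfolding inspan_def by blast
qed

lemma fb_shift0: "fb s 0 (Suc l) - a * fb s 0 l = (s - a) * fb s 0 l"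
  by (simp add: fb_def algebra_simps)

lemma fb_shift: "fb s (Suc u) (Suc l) - a * fb s (Suc u) l = (s - a) * fb s (Suc u) l + fb s u l"
proof (cases "Suc u \<le> l")
  case True
  then obtain k where k: "l = Suc u + k" using le_Suc_ex by blast
  have e1: "s ^ (Suc l - Suc u) = s * s ^ (l - Suc u)" and e2: "s ^ (l - u) = s * s ^ (l - Suc u)"
    using k by simp_all
  show ?thesis unfolding fb_def using True
    by (simp add: e1 e2 algebra_simps)
next
  case False
  then have z: "l choose Suc u = 0" by simp
  moreover have "Suc l choose Suc u = l choose u" using False
    by (simp)
  ultimately show ?thesis unfolding fb_def by (simp only: z of_nat_0 mult_zero_left mult_zero_right diff_zero add_0_left) simp
qed


lemma preimage_basis_a:
  assumes "finite S" "a \<in> S" "Suc u < m a"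
  shows "\<exists>w. inspan S m w \<and> (\<forall>l. w (Suc l) - a * w l = fb a u l)"
  using assms inspan_basis[of S a "Suc u" m] fb_shift[of a u _ a] by (intro exI[of _ "fb a (Suc u)"]) simp

lemma preimage_basis_s:
  assumes "finite S" "s \<in> S" "(s - a) * c = 1"
  shows "u < m s \<Longrightarrow> \<exists>w. inspan S m w \<and> (\<forall>l. w (Suc l) - a * w l = fb s u l)"
proof (induction u)
  case 0
  show ?case
  proof (intro exI[of _ "\<lambda>l. c * fb s 0 l"] conjI allI)
    show "inspan S m (\<lambda>l. c * fb s 0 l)" using inspan_scale inspan_basis[of S s 0 m] assms 0 by auto
    fix l
    have "c * fb s 0 (Suc l) - a * (c * fb s 0 l) = c * (fb s 0 (Suc l) - a * fb s 0 l)"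
      by (simp add: algebra_simps)
    also have "\<dots> = fb s 0 l" using fb_shift0[of s l a] assms(3)
      by (simp add: mult.assoc[symmetric] mult.commute)
    finally show "c * fb s 0 (Suc l) - a * (c * fb s 0 l) = fb s 0 l" .
  qed
next
  case (Suc u)
  then obtain w where w: "inspan S m w" "\<forall>l. w (Suc l) - a * w l = fb s u l" by auto
  show ?case
  proof (intro exI[of _ "\<lambda>l. c * (fb s (Suc u) l - w l)"] conjI allI)
    show "inspan S m (\<lambda>l. c * (fb s (Suc u) l - w l))"
      using inspan_scale[OF inspan_diff[OF inspan_basis[of S s "Suc u" m, OF assms(1,2) Suc.prems] w(1)]] .
    fix l
    have "c * (fb s (Suc u) (Suc l) - w (Suc l)) - a * (c * (fb s (Suc u) l - w l))
        = c * ((fb s (Suc u) (Suc l) - a * fb s (Suc u) l) - (w (Suc l) - a * w l))"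
      by (simp add: algebra_simps)
    also have "\<dots> = c * ((s - a) * fb s (Suc u) l)" using fb_shift[of s u l a] w(2) by simp
    also have "\<dots> = fb s (Suc u) l" using assms(3)
      by (simp add: mult.assoc[symmetric] mult.commute)
    finally show "c * (fb s (Suc u) (Suc l) - w (Suc l)) - a * (c * (fb s (Suc u) l - w l)) = fb s (Suc u) l" .
  qed
qed

lemma preimage:
  assumes S: "finite S" "a \<in> S" and ma: "m a \<ge> 1"
    and unit: "\<And>s s'. s \<in> S \<Longrightarrow> s' \<in> S \<Longrightarrow> s \<noteq> s' \<Longrightarrow> (s - s') dvd 1"
    and v: "inspan S (m(a := m a - 1)) v"
  shows "\<exists>w. inspan S m w \<and> (\<forall>l. w (Suc l) - a * w l = v l)"
proof -
  define m' where "m' = m(a := m a - 1)"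
  obtain \<alpha> where \<alpha>: "v = val \<alpha> S m'" using v inspan_def m'_def by blast
  have "\<forall>s\<in>S. \<forall>u<m' s. \<exists>w. inspan S m w \<and> (\<forall>l. w (Suc l) - a * w l = fb s u l)"
  proof (intro ballI allI impI)
    fix s u assume s: "s \<in> S" "u < m' s"
    show "\<exists>w. inspan S m w \<and> (\<forall>l. w (Suc l) - a * w l = fb s u l)"
    proof (cases "s = a")
      case True
      then have "Suc u < m a" using s(2) ma unfolding m'_def by simp
      then show ?thesis using preimage_basis_a[of S a u m] S True by simp
    next
      case False
      then obtain c where "1 = (s - a) * c" using unit[OF s(1) S(2)] by (auto elim: dvdE)
      moreover have "u < m s" using s(2) False unfolding m'_def by simp
      ultimately show ?thesis using preimage_basis_s[of S s a c u m] S s(1) by simp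
    qed
  qed
  then have ex: "\<And>s u. s \<in> S \<Longrightarrow> u < m' s \<Longrightarrow> \<exists>w. inspan S m w \<and> (\<forall>l. w (Suc l) - a * w l = fb s u l)"
    by blast
  define W where "W s u = (SOME w. inspan S m w \<and> (\<forall>l. w (Suc l) - a * w l = fb s u l))" for s u
  have W: "\<forall>s\<in>S. \<forall>u<m' s. inspan S m (W s u) \<and> (\<forall>l. W s u (Suc l) - a * W s u l = fb s u l)"
  proof (intro ballI allI impI)
    fix s u assume "s \<in> S" "u < m' s"
    from someI_ex[OF ex[OF this]] show "inspan S m (W s u) \<and> (\<forall>l. W s u (Suc l) - a * W s u l = fb s u l)"
      unfolding W_def .
  qed
  define w where "w = (\<lambda>l. \<Sum>s\<in>S. \<Sum>u<m' s. \<alpha> s u * W s u l)"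
  have "inspan S m w" unfolding w_def
  proof (rule inspan_sum[OF S(1)], rule ballI)
    fix s assume s: "s \<in> S"
    show "inspan S m (\<lambda>l. \<Sum>u<m' s. \<alpha> s u * W s u l)"
    proof (rule inspan_sum, simp, rule ballI)
      fix u assume "u \<in> {..<m' s}"
      then have "inspan S m (W s u)" using W s by simp
      then show "inspan S m (\<lambda>l. \<alpha> s u * W s u l)" by (rule inspan_scale)
    qed
  qed
  moreover have "w (Suc l) - a * w l = v l" for l
  proof -
    have "w (Suc l) - a * w l = (\<Sum>s\<in>S. \<Sum>u<m' s. \<alpha> s u * (W s u (Suc l) - a * W s u l))"
      unfolding w_def sum_distrib_left right_diff_distrib sum_subtractf[symmetric]
      by (simp add: mult.left_commute)
    also have "\<dots> = (\<Sum>s\<in>S. \<Sum>u<m' s. \<alpha> s u * fb s u l)"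
      using W by (intro sum.cong) auto
    finally show ?thesis by (simp add: \<alpha> val_def)
  qed
  ultimately show ?thesis by blast
qed

lemma main:
  assumes S: "finite S"
    and unit: "\<And>s s'. s \<in> S \<Longrightarrow> s' \<in> S \<Longrightarrow> s \<noteq> s' \<Longrightarrow> (s - s') dvd 1"
  shows "\<forall>m. (\<Sum>s\<in>S. m s) = Suc d \<longrightarrow> (\<exists>v. inspan S m v \<and> (\<forall>l<d. v l = 0) \<and> v d = 1)"
proof (induction d)
  case 0
  show ?case
  proof (intro allI impI)
    fix m :: "'a \<Rightarrow> nat" assume sm: "(\<Sum>s\<in>S. m s) = Suc 0"
    have "\<exists>a\<in>S. m a \<noteq> 0"
    proof (rule ccontr)
      assume "\<not> ?thesis" then have "(\<Sum>s\<in>S. m s) = 0" by simp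
      then show False using sm by simp
    qed
    then obtain a where a: "a \<in> S" "m a \<noteq> 0" by blast
    then show "\<exists>v. inspan S m v \<and> (\<forall>l<0. v l = 0) \<and> v 0 = 1"
      using inspan_basis[OF S a(1), of 0 m] by (intro exI[of _ "fb a 0"]) (auto simp: fb_def)
  qed
next
  case (Suc d)
  show ?case
  proof (intro allI impI)
    fix m :: "'a \<Rightarrow> nat" assume sm: "(\<Sum>s\<in>S. m s) = Suc (Suc d)"
    have "\<exists>a\<in>S. m a \<noteq> 0"
    proof (rule ccontr)
      assume "\<not> ?thesis" then have "(\<Sum>s\<in>S. m s) = 0" by simp
      then show False using sm by simp
    qed
    then obtain a where a: "a \<in> S" "m a \<noteq> 0" by blast
    define m' where "m' = m(a := m a - 1)"
    have "(\<Sum>s\<in>S. m s) = m a + (\<Sum>s\<in>S-{a}. m s)" by (rule sum.remove[OF S a(1)])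
    moreover have "(\<Sum>s\<in>S. m' s) = m' a + (\<Sum>s\<in>S-{a}. m' s)" by (rule sum.remove[OF S a(1)])
    moreover have "(\<Sum>s\<in>S-{a}. m' s) = (\<Sum>s\<in>S-{a}. m s)" unfolding m'_def by (intro sum.cong) auto
    ultimately have "(\<Sum>s\<in>S. m' s) = Suc d" using sm a unfolding m'_def by simp
    then obtain v where v: "inspan S m' v" "\<forall>l<d. v l = 0" "v d = 1" using Suc.IH by blast
    have ma1: "m a \<ge> 1" using a(2) by simp
    have v1: "inspan S (m(a := m a - 1)) v" using v(1) unfolding m'_def .
    obtain w where w: "inspan S m w" "\<forall>l. w (Suc l) - a * w l = v l"
      using preimage[of S a m v, OF S a(1) ma1 unit v1] by blast
    define w' where "w' = (\<lambda>l. w l - w 0 * fb a 0 l)"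
    have w'1: "inspan S m w'" unfolding w'_def
      using inspan_diff[OF w(1) inspan_scale[OF inspan_basis[OF S a(1), of 0 m]]] a by simp
    have w'2: "w' (Suc l) = a * w' l + v l" for l
      using w(2)[rule_format, of l] unfolding w'_def fb_def by (simp add: algebra_simps)
    have w'0: "w' 0 = 0" unfolding w'_def fb_def by simp
    have z: "l \<le> d \<longrightarrow> w' l = 0" for l
      by (induction l) (use w'0 w'2 v(2) in auto)
    show "\<exists>v. inspan S m v \<and> (\<forall>l<Suc d. v l = 0) \<and> v (Suc d) = 1"
      using w'1 z w'2[of d] v(3) by (intro exI[of _ w']) auto
  qed
qed

theorem lemma4:
  fixes S :: "'a :: comm_ring_1 set" and m :: "'a \<Rightarrow> nat"
  assumes "finite S"
    and "\<And>s. s \<in> S \<Longrightarrow> m s \<ge> 1"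
    and "\<And>s s'. s \<in> S \<Longrightarrow> s' \<in> S \<Longrightarrow> s \<noteq> s' \<Longrightarrow> (s - s') dvd 1"
  shows "\<exists>\<alpha> :: 'a \<Rightarrow> nat \<Rightarrow> 'a. \<forall>l :: nat.
           (int l < int (\<Sum>s\<in>S. m s) - 1 \<longrightarrow>
              (\<Sum>s\<in>S. \<Sum>u<m s. \<alpha> s u * of_nat (l choose u) * s ^ (l - u)) = 0) \<and>
           (int l = int (\<Sum>s\<in>S. m s) - 1 \<longrightarrow>
              (\<Sum>s\<in>S. \<Sum>u<m s. \<alpha> s u * of_nat (l choose u) * s ^ (l - u)) = 1)"
proof (cases "(\<Sum>s\<in>S. m s) = 0")
  case True
  then show ?thesis by simp
next
  case False
  then obtain d where d: "(\<Sum>s\<in>S. m s) = Suc d" using not0_implies_Suc by blast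
  then obtain v where v: "inspan S m v" "\<forall>l<d. v l = 0" "v d = 1"
    using main[OF assms(1) assms(3), of d] by blast
  then obtain \<alpha> where \<alpha>: "v = val \<alpha> S m" unfolding inspan_def by blast
  have e: "(\<Sum>s\<in>S. \<Sum>u<m s. \<alpha> s u * of_nat (l choose u) * s ^ (l - u)) = v l" for l
    unfolding \<alpha> val_def fb_def by (simp add: mult.assoc)
  show ?thesis using v d by (intro exI[of _ \<alpha>]) (auto simp: e)
qed

end
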